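(* Fix $a,b,\kappa>0$ and let $p(s)=a+bs$. For $\alpha>0$ set $p_1=\frac{\kappa}{1+\alpha}p$ and $p_2=\alpha p_1$ (i.e. $a_1=\frac{\kappa a}{1+\alpha}$, $b_1=\frac{\kappa b}{1+\alpha}$, $a_2=\alpha a_1$, $b_2=\alpha b_1$). Then there exists $\bar\alpha>0$ such that for every $\alpha>\bar\alpha$, the function $C_1$ defined in the context satisfies $\sup_{\omega\ge0}|C_1(j\omega)|<1$. (Indeed $\sup_\omega|C_1(j\omega)|\to 0$ as $\alpha\to\infty$.)
   Context: For constants $a_1,b_1,a_2,b_2>0$ and complex $s$, set $p_1(s)=a_1+b_1 s$, $p_2(s)=a_2+b_2 s$, $q=p_1+p_2$, and $m(s)=(s^2+q)\sqrt{1-\frac{4p_1p_2}{(s^2+q)^2}}$ with $\sqrt{\cdot}$ the principal complex square root (nonnegative real part), so $m^2=(s^2+q)^2-4p_1p_2$. Define $C_1=\frac{(s^2+q)-m}{2p_2}$. $j$ denotes the imaginary unit. *)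

theory Defs
  imports "HOL-Analysis.Analysis"
begin

definition p_lin :: "real \<Rightarrow> real \<Rightarrow> complex \<Rightarrow> complex" where
  "p_lin a b s = of_real a + of_real b * s"

definition m_fun :: "real \<Rightarrow> real \<Rightarrow> real \<Rightarrow> real \<Rightarrow> complex \<Rightarrow> complex" where
  "m_fun a1 b1 a2 b2 s =
     (let q = p_lin a1 b1 s + p_lin a2 b2 s
      in (s^2 + q) * csqrt (1 - 4 * p_lin a1 b1 s * p_lin a2 b2 s / (s^2 + q)^2))"

definition C1 :: "real \<Rightarrow> real \<Rightarrow> real \<Rightarrow> real \<Rightarrow> complex \<Rightarrow> complex" where
  "C1 a1 b1 a2 b2 s =
     (let q = p_lin a1 b1 s + p_lin a2 b2 s
      in ((s^2 + q) - m_fun a1 b1 a2 b2 s) / (2 * p_lin a2 b2 s))"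

end

theory Submission imports Defs begin

lemma one_minus_csqrt: "cmod (1 - csqrt (1 - x)) \<le> cmod x"
proof -
  define r where "r = csqrt (1 - x)"
  have r2: "r^2 = 1 - x" unfolding r_def by simp
  have "Re (1 + r) \<ge> 1" unfolding r_def using Re_csqrt[of "1-x"] by simp
  hence n1: "cmod (1 + r) \<ge> 1" using complex_Re_le_cmod order_trans by blast
  have "(1 - r) * (1 + r) = x" using r2 by (simp add: algebra_simps power2_eq_square)
  hence "cmod x = cmod (1 - r) * cmod (1 + r)" by (metis norm_mult)
  also have "\<dots> \<ge> cmod (1 - r)" using n1 by (metis mult_left_mono mult.right_neutral norm_ge_zero)
  finally show ?thesis unfolding r_def by simp
qed

lemma C_bound:
  fixes z P1 P2 :: complex assumes "z \<noteq> 0"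
  shows "cmod ((z - z * csqrt (1 - 4*P1*P2/z^2)) / (2*P2)) \<le> 2 * cmod P1 / cmod z"
proof (cases "P2 = 0")
  case True thus ?thesis by simp
next
  case False
  have "(z - z * csqrt (1 - 4*P1*P2/z^2)) / (2*P2) = z * (1 - csqrt (1 - 4*P1*P2/z^2)) / (2*P2)"
    by (simp add: algebra_simps)
  hence "cmod ((z - z * csqrt (1 - 4*P1*P2/z^2)) / (2*P2)) = cmod z * cmod (1 - csqrt (1 - 4*P1*P2/z^2)) / (2 * cmod P2)"
    by (metis norm_mult norm_divide norm_numeral)
  also have "\<dots> \<le> cmod z * cmod (4*P1*P2/z^2) / (2 * cmod P2)"
    by (intro divide_right_mono mult_left_mono one_minus_csqrt) auto
  also have "\<dots> = 2 * cmod P1 / cmod z" using assms False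
    by (simp add: norm_mult norm_divide norm_power field_simps power2_eq_square)
  finally show ?thesis .
qed

lemma p_bound:
  fixes a b k w :: real assumes "a>0" "b>0" "k>0"
  shows "cmod (of_real a + of_real b * (\<i> * of_real w)) \<le>
     sqrt (5/k^2 + 2*a/(k^3*b^2)) * cmod ((\<i> * of_real w)^2 + (of_real (k*a) + of_real (k*b) * (\<i> * of_real w)))"
proof -
  define D where "D = (k*a - w^2)^2 + (k*b*w)^2"
  have zD: "(cmod ((\<i> * of_real w)^2 + (of_real (k*a) + of_real (k*b) * (\<i> * of_real w))))^2 = D"
    unfolding D_def cmod_power2 by (simp add: power2_eq_square)
  have pD: "(cmod (of_real a + of_real b * (\<i> * of_real w)))^2 = a^2 + (b*w)^2"
    unfolding cmod_power2 by (simp add: power2_eq_square)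
  have D0: "D \<ge> 0" unfolding D_def by simp
  have "(k*b*w)^2 \<le> D" unfolding D_def by simp
  hence bw: "(b*w)^2 \<le> D / k^2" using assms by (simp add: field_simps power_mult_distrib)
  have aa: "a^2 \<le> (4/k^2 + 2*a/(k^3*b^2)) * D"
  proof -
    have "a^2 \<le> 4/k^2 * D \<or> a^2 \<le> 2*a/(k^3*b^2) * D"
    proof (cases "w^2 \<le> k*a/2")
      case True
      hence "k*a - w^2 \<ge> k*a/2" by (simp add: mult.commute)
      hence "(k*a - w^2)^2 \<ge> (k*a/2)^2" using assms by (intro power_mono) auto
      hence "D \<ge> (k*a/2)^2" unfolding D_def by (smt (verit) zero_le_power2)
      thus ?thesis using assms by (simp add: field_simps power2_eq_square)
    next
      case False
      show ?thesis
      proof (cases "w^2 \<ge> 2*k*a")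
        case True
        hence "w^2 - k*a \<ge> k*a" by linarith
        hence "(w^2 - k*a)^2 \<ge> (k*a)^2" using assms by (intro power_mono) auto
        hence "D \<ge> (k*a)^2" unfolding D_def by (simp add: power2_commute add_increasing2)
        moreover have "(k*a)^2 \<ge> (k*a/2)^2" using assms by (intro power_mono) auto
        ultimately have "D \<ge> (k*a/2)^2" by linarith
        thus ?thesis using assms by (simp add: field_simps power2_eq_square)
      next
        case F2: False
        have "D \<ge> (k*b)^2 * w^2" unfolding D_def by (simp add: power_mult_distrib)
        also have "(k*b)^2 * w^2 \<ge> (k*b)^2 * (k*a/2)" using False by (intro mult_left_mono) auto
        finally have "D \<ge> (k*b)^2 * (k*a/2)" .
        thus ?thesis using assms by (simp add: field_simps power2_eq_square power3_eq_cube)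
      qed
    qed
    moreover have "0 \<le> 4/k^2 * D" "0 \<le> 2*a/(k^3*b^2) * D" using assms D0 by auto
    ultimately show ?thesis by (auto simp: algebra_simps)
  qed
  have "(cmod (of_real a + of_real b * (\<i> * of_real w)))^2 \<le> (5/k^2 + 2*a/(k^3*b^2)) * D"
  proof -
    have "(5/k^2 + 2*a/(k^3*b^2)) * D = (4/k^2 + 2*a/(k^3*b^2)) * D + D/k^2" by (simp add: field_simps)
    thus ?thesis using pD aa bw by linarith
  qed
  also have "\<dots> = (sqrt (5/k^2 + 2*a/(k^3*b^2)) * cmod ((\<i> * of_real w)^2 + (of_real (k*a) + of_real (k*b) * (\<i> * of_real w))))^2"
  proof -
    have M0: "0 \<le> 5/k^2 + 2*a/(k^3*b^2)" using assms by simp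
    show ?thesis by (subst power_mult_distrib[of "sqrt _"], subst zD, subst real_sqrt_pow2[OF M0]) (rule refl)
  qed
  finally show ?thesis by (rule power2_le_imp_le) (use assms in auto)
qed

lemma C1_est:
  fixes a b k al w :: real assumes "a>0" "b>0" "k>0" "al>0"
  shows "cmod (C1 (k*a/(1+al)) (k*b/(1+al)) (al*(k*a/(1+al))) (al*(k*b/(1+al))) (\<i> * of_real w))
         \<le> 2 * k * sqrt (5/k^2 + 2*a/(k^3*b^2)) / (1+al)"
proof -
  define M where "M = sqrt (5/k^2 + 2*a/(k^3*b^2))"
  define s where "s = \<i> * of_real w"
  define p where "p = of_real a + of_real b * s"
  define z where "z = s^2 + (of_real (k*a) + of_real (k*b) * s)"
  define P1 where "P1 = p_lin (k*a/(1+al)) (k*b/(1+al)) s"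
  define P2 where "P2 = p_lin (al*(k*a/(1+al))) (al*(k*b/(1+al))) s"
  have pz: "cmod p \<le> M * cmod z" unfolding p_def z_def M_def s_def by (rule p_bound[OF assms(1-3)])
  have "Re p = a" unfolding p_def s_def by simp
  hence "cmod p > 0" using assms complex_Re_le_cmod[of p] by linarith
  hence z0: "z \<noteq> 0" using pz by auto
  have al1: "1 + al \<noteq> 0" using assms by simp
  have e1: "k*a/(1+al) + al*(k*a/(1+al)) = k*a"
  proof -
    have "k*a/(1+al) + al*(k*a/(1+al)) = (1+al)*(k*a/(1+al))" by (simp only: distrib_right mult_1_left)
    thus ?thesis using al1 by simp
  qed
  have e2: "k*b/(1+al) + al*(k*b/(1+al)) = k*b"
  proof -
    have "k*b/(1+al) + al*(k*b/(1+al)) = (1+al)*(k*b/(1+al))" by (simp only: distrib_right mult_1_left)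
    thus ?thesis using al1 by simp
  qed
  have "P1 + P2 = of_real (k*a/(1+al) + al*(k*a/(1+al))) + of_real (k*b/(1+al) + al*(k*b/(1+al))) * s"
    unfolding P1_def P2_def p_lin_def of_real_add by (simp add: algebra_simps del: of_real_mult of_real_divide)
  hence q: "P1 + P2 = of_real (k*a) + of_real (k*b) * s" unfolding e1 e2 .
  have P1: "P1 = of_real (k/(1+al)) * p" unfolding P1_def p_lin_def p_def by (simp add: algebra_simps add_divide_distrib)
  have "C1 (k*a/(1+al)) (k*b/(1+al)) (al*(k*a/(1+al))) (al*(k*b/(1+al))) s
        = (z - z * csqrt (1 - 4*P1*P2/z^2)) / (2*P2)"
    unfolding C1_def m_fun_def Let_def P1_def[symmetric] P2_def[symmetric] q z_def by simp
  hence "cmod (C1 (k*a/(1+al)) (k*b/(1+al)) (al*(k*a/(1+al))) (al*(k*b/(1+al))) s) \<le> 2 * cmod P1 / cmod z"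
    using C_bound[OF z0] by simp
  also have "cmod P1 = k/(1+al) * cmod p" unfolding P1 using assms by (simp only: norm_mult norm_of_real) (simp add: abs_of_pos)
  also have "2 * (k/(1+al) * cmod p) / cmod z \<le> 2 * (k/(1+al) * (M * cmod z)) / cmod z"
    using pz assms z0 by (intro divide_right_mono mult_left_mono) auto
  also have "\<dots> = 2 * k * M / (1+al)" using z0 by simp
  finally show ?thesis unfolding s_def M_def .
qed

theorem lemma2:
  fixes a b \<kappa> :: real
  assumes "a > 0" and "b > 0" and "\<kappa> > 0"
  shows "\<exists>\<alpha>bar>0. \<forall>\<alpha>>\<alpha>bar.
           bdd_above ((\<lambda>\<omega>. cmod (C1 (\<kappa>*a/(1+\<alpha>)) (\<kappa>*b/(1+\<alpha>))
                   (\<alpha>*(\<kappa>*a/(1+\<alpha>))) (\<alpha>*(\<kappa>*b/(1+\<alpha>))) (\<i> * of_real \<omega>))) ` {0..}) \<and>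
           (SUP \<omega>\<in>{0..}. cmod (C1 (\<kappa>*a/(1+\<alpha>)) (\<kappa>*b/(1+\<alpha>))
                   (\<alpha>*(\<kappa>*a/(1+\<alpha>))) (\<alpha>*(\<kappa>*b/(1+\<alpha>))) (\<i> * of_real \<omega>))) < 1"
proof -
  define M where "M = sqrt (5/\<kappa>^2 + 2*a/(\<kappa>^3*b^2))"
  have M0: "M > 0" unfolding M_def using assms by (intro real_sqrt_gt_zero add_pos_pos) auto
  show ?thesis
  proof (intro exI[of _ "4*\<kappa>*M"] conjI allI impI)
    show "0 < 4*\<kappa>*M" using M0 assms by simp
    fix al :: real assume al: "4*\<kappa>*M < al"
    hence al0: "al > 0" using M0 assms by (smt (verit) mult_pos_pos)
    have bnd: "cmod (C1 (\<kappa>*a/(1+al)) (\<kappa>*b/(1+al)) (al*(\<kappa>*a/(1+al))) (al*(\<kappa>*b/(1+al))) (\<i> * of_real w)) \<le> 1/2" for w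
    proof -
      have "2*\<kappa>*M / (1+al) \<le> 1/2" using al al0 by (simp add: field_simps)
      thus ?thesis using C1_est[OF assms al0, of w] unfolding M_def by linarith
    qed
    show "bdd_above ((\<lambda>\<omega>. cmod (C1 (\<kappa>*a/(1+al)) (\<kappa>*b/(1+al))
                   (al*(\<kappa>*a/(1+al))) (al*(\<kappa>*b/(1+al))) (\<i> * of_real \<omega>))) ` {0..})"
      using bnd by (intro bdd_aboveI[of _ "1/2"]) auto
    have "(SUP \<omega>\<in>{0::real..}. cmod (C1 (\<kappa>*a/(1+al)) (\<kappa>*b/(1+al))
                   (al*(\<kappa>*a/(1+al))) (al*(\<kappa>*b/(1+al))) (\<i> * of_real \<omega>))) \<le> 1/2"
      using bnd by (intro cSUP_least) auto
    thus "(SUP \<omega>\<in>{0::real..}. cmod (C1 (\<kappa>*a/(1+al)) (\<kappa>*b/(1+al))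
                   (al*(\<kappa>*a/(1+al))) (al*(\<kappa>*b/(1+al))) (\<i> * of_real \<omega>))) < 1" by linarith
  qed
qed

end
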